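(* Let $n\ge 0$ and let $R$ be a local algebra of $\mathbb C$-dimension $n+2$. If $R$ is not isomorphic to $B_n=\mathbb C[S_1,\ldots,S_{n+1}]/(S_iS_j\mid i,j=1,\ldots,n+1)$, then $R$ is an $n$-factor.
   Context: A local algebra means a finite-dimensional commutative associative unital $\mathbb C$-algebra with a unique maximal ideal $\mathfrak m_R$ and $R/\mathfrak m_R\cong\mathbb C$. An $n$-factor is an algebra of the form $\mathbb C[S_1,\ldots,S_n]/I$ (for some ideal $I$) in which the images of $S_1,\ldots,S_n$ are linearly independent over $\mathbb C$; equivalently, an algebra generated by $n$ linearly independent elements. *)

theory Defs
  imports Main Complex_Main
begin

text \<open>A commutative associative unital complex algebra: the ring structure comes from
  the type class comm_ring_1, the complex scalar multiplication is given by sc.\<close>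
definition cx_algebra :: "(complex \<Rightarrow> 'a::comm_ring_1 \<Rightarrow> 'a) \<Rightarrow> bool" where
  "cx_algebra sc \<longleftrightarrow> vector_space sc \<and> (\<forall>c x y. sc c (x * y) = sc c x * y)"

definition is_ideal :: "'a::comm_ring_1 set \<Rightarrow> bool" where
  "is_ideal I \<longleftrightarrow> 0 \<in> I \<and> (\<forall>x\<in>I. \<forall>y\<in>I. x + y \<in> I) \<and> (\<forall>r. \<forall>x\<in>I. r * x \<in> I)"

definition maximal_ideal :: "'a::comm_ring_1 set \<Rightarrow> bool" where
  "maximal_ideal M \<longleftrightarrow> is_ideal M \<and> M \<noteq> UNIV \<and>
     (\<forall>J. is_ideal J \<and> M \<subseteq> J \<longrightarrow> J = M \<or> J = UNIV)"

text \<open>The natural map from the scalars to R/m (c to the class of c*1) is a bijection,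
  i.e. R/m is isomorphic to C.\<close>
definition residue_field_C :: "(complex \<Rightarrow> 'a::comm_ring_1 \<Rightarrow> 'a) \<Rightarrow> 'a set \<Rightarrow> bool" where
  "residue_field_C sc M \<longleftrightarrow> (\<forall>x. \<exists>!c. x - sc c 1 \<in> M)"

definition local_algebra :: "(complex \<Rightarrow> 'a::comm_ring_1 \<Rightarrow> 'a) \<Rightarrow> bool" where
  "local_algebra sc \<longleftrightarrow> cx_algebra sc \<and> (\<exists>B. finite B \<and> module.span sc B = UNIV) \<and>
     (\<exists>!M :: 'a set. maximal_ideal M) \<and> (\<forall>M. maximal_ideal M \<longrightarrow> residue_field_C sc M)"

definition subalg_gen :: "(complex \<Rightarrow> 'a::comm_ring_1 \<Rightarrow> 'a) \<Rightarrow> 'a set \<Rightarrow> 'a set" where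
  "subalg_gen sc S = \<Inter>{A. S \<subseteq> A \<and> 1 \<in> A \<and> (\<forall>x\<in>A. \<forall>y\<in>A. x + y \<in> A \<and> x * y \<in> A) \<and>
                          (\<forall>c. \<forall>x\<in>A. sc c x \<in> A)}"

text \<open>R is an n-factor: generated (as an algebra) by n linearly independent elements,
  i.e. R is a quotient of C[S_1..S_n] in which the images of the S_i are independent.\<close>
definition n_factor :: "(complex \<Rightarrow> 'a::comm_ring_1 \<Rightarrow> 'a) \<Rightarrow> nat \<Rightarrow> bool" where
  "n_factor sc n \<longleftrightarrow> (\<exists>s :: nat \<Rightarrow> 'a. inj_on s {..<n} \<and> \<not> module.dependent sc (s ` {..<n}) \<and>
      subalg_gen sc (s ` {..<n}) = UNIV)"

text \<open>Concrete model of B_n = C[S_1..S_{n+1}]/(S_i S_j): it has basis 1, S_1, ..., S_{n+1};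
  an element a_0 + sum a_i S_i is the coefficient function a (index 0 = constant term),
  with a i = 0 for i > n+1.\<close>
definition Bn_carrier :: "nat \<Rightarrow> (nat \<Rightarrow> complex) set" where
  "Bn_carrier n = {a. \<forall>i>n+1. a i = 0}"

definition Bn_add :: "(nat \<Rightarrow> complex) \<Rightarrow> (nat \<Rightarrow> complex) \<Rightarrow> (nat \<Rightarrow> complex)" where
  "Bn_add a b = (\<lambda>i. a i + b i)"

definition Bn_scale :: "complex \<Rightarrow> (nat \<Rightarrow> complex) \<Rightarrow> (nat \<Rightarrow> complex)" where
  "Bn_scale c a = (\<lambda>i. c * a i)"

definition Bn_mult :: "nat \<Rightarrow> (nat \<Rightarrow> complex) \<Rightarrow> (nat \<Rightarrow> complex) \<Rightarrow> (nat \<Rightarrow> complex)" where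
  "Bn_mult n a b = (\<lambda>i. if i = 0 then a 0 * b 0
                        else if i \<le> n + 1 then a 0 * b i + b 0 * a i else 0)"

definition Bn_one :: "nat \<Rightarrow> complex" where
  "Bn_one = (\<lambda>i. if i = 0 then 1 else 0)"

definition iso_Bn :: "(complex \<Rightarrow> 'a::comm_ring_1 \<Rightarrow> 'a) \<Rightarrow> nat \<Rightarrow> bool" where
  "iso_Bn sc n \<longleftrightarrow> (\<exists>f. bij_betw f UNIV (Bn_carrier n) \<and>
      (\<forall>x y. f (x + y) = Bn_add (f x) (f y)) \<and>
      (\<forall>x y. f (x * y) = Bn_mult n (f x) (f y)) \<and>
      (\<forall>c x. f (sc c x) = Bn_scale c (f x)) \<and>
      f 1 = Bn_one)"

end

theory Submission
  imports Defs
begin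

locale la = finite_dimensional_vector_space sc Basis
  for sc :: "complex \<Rightarrow> 'a::comm_ring_1 \<Rightarrow> 'a" and Basis +
  fixes M :: "'a set"
  assumes multc: "\<And>c x y. sc c (x * y) = sc c x * y"
    and maxM: "maximal_ideal M"
    and uniqM: "\<And>J. maximal_ideal J \<Longrightarrow> J = M"
    and resM: "residue_field_C sc M"
begin

lemma sc1: "sc c x = sc c 1 * x"
  using multc[of c 1 x] by simp

lemma scm1: "sc c x * y = sc c (x * y)" using multc by simp
lemma scm2: "x * sc c y = sc c (x * y)" using multc[of c y x] by (simp add: mult.commute)

lemma ideal_subspace: "is_ideal I \<Longrightarrow> subspace I"
  unfolding subspace_def is_ideal_def by (metis sc1)

lemma M_ideal: "is_ideal M" using maxM maximal_ideal_def by blast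
lemma M_sub: "subspace M" using ideal_subspace M_ideal by blast

lemma ideal_one: "is_ideal I \<Longrightarrow> 1 \<in> I \<Longrightarrow> I = UNIV"
  unfolding is_ideal_def by (metis UNIV_eq_I mult.right_neutral)

lemma one_notin: "1 \<notin> M"
  using ideal_one M_ideal maxM maximal_ideal_def by blast

lemma M_mult: "x \<in> M \<Longrightarrow> r * x \<in> M" "x \<in> M \<Longrightarrow> x * r \<in> M"
  using M_ideal unfolding is_ideal_def by (auto simp: mult.commute)

lemma contain: assumes I: "is_ideal I" "1 \<notin> I" shows "I \<subseteq> M"
proof -
  let ?P = "\<lambda>d. \<exists>J. is_ideal J \<and> I \<subseteq> J \<and> 1 \<notin> J \<and> dim J = d"
  have "\<exists>d. ?P d \<and> (\<forall>y. ?P y \<longrightarrow> y \<le> d)"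
    apply (rule Nat.ex_has_greatest_nat[of ?P "dim I" dimension])
    using I dim_subset_UNIV by auto
  then obtain J where J: "is_ideal J" "I \<subseteq> J" "1 \<notin> J"
     and Jmax: "\<And>K. is_ideal K \<Longrightarrow> I \<subseteq> K \<Longrightarrow> 1 \<notin> K \<Longrightarrow> dim K \<le> dim J" by blast
  have "maximal_ideal J"
    unfolding maximal_ideal_def
  proof (intro conjI allI impI)
    show "is_ideal J" "J \<noteq> UNIV" using J by auto
    fix K assume K: "is_ideal K \<and> J \<subseteq> K"
    show "K = J \<or> K = UNIV"
    proof (cases "1 \<in> K")
      case True then show ?thesis using ideal_one K by blast
    next
      case False
      then have "dim K \<le> dim J" using Jmax K J by blast
      then have "J = K" using subspace_dim_equal[of J K] ideal_subspace K J by blast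
      then show ?thesis by simp
    qed
  qed
  then show ?thesis using uniqM J by blast
qed

lemma unit: assumes "y \<notin> M" shows "\<exists>u. y * u = 1"
proof (rule ccontr)
  assume nu: "\<not> ?thesis"
  have "is_ideal (range ((*) y))"
    unfolding is_ideal_def
  proof (intro conjI ballI allI)
    show "0 \<in> range ((*) y)" by (metis rangeI mult_zero_right)
    fix a b assume "a \<in> range ((*) y)" "b \<in> range ((*) y)"
    then show "a + b \<in> range ((*) y)" by (auto simp: distrib_left[symmetric])
  next
    fix r a assume "a \<in> range ((*) y)"
    then show "r * a \<in> range ((*) y)" by (metis (no_types, lifting) image_iff mult.left_commute rangeI)
  qed
  moreover have "1 \<notin> range ((*) y)" using nu by auto
  ultimately have "range ((*) y) \<subseteq> M" using contain by blast
  then show False using assms by (metis rangeI mult.right_neutral subsetD)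
qed

lemma L1: assumes x: "x \<in> M" and xx: "x * x = sc c x" shows "x * x = 0"
proof (cases "c = 0")
  case True then show ?thesis using xx by simp
next
  case False
  define e where "e = sc (inverse c) x"
  have ee: "e * e = e"
    unfolding e_def scm1 scm2 xx using False by simp
  have eM: "e \<in> M" using x M_sub unfolding e_def subspace_def by blast
  have "1 - e \<notin> M"
  proof
    assume "1 - e \<in> M"
    then have "(1 - e) + e \<in> M" using eM M_ideal unfolding is_ideal_def by blast
    then show False using one_notin by simp
  qed
  then obtain u where u: "(1 - e) * u = 1" using unit by blast
  have "e = e * ((1 - e) * u)" using u by simp
  also have "\<dots> = (e - e * e) * u" by (simp add: algebra_simps)
  finally have "e = 0" using ee by simp
  then have "x = 0" unfolding e_def using False by simp
  then show ?thesis by simp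
qed

lemma resid: "\<exists>c. x - sc c 1 \<in> M" using resM unfolding residue_field_C_def by blast

lemma span_all: assumes "M \<subseteq> span B" shows "span (insert 1 B) = UNIV"
proof -
  have "x \<in> span (insert 1 B)" for x
  proof -
    obtain c where c: "x - sc c 1 \<in> M" using resid by blast
    then have "x - sc c 1 \<in> span (insert 1 B)" using assms span_mono[of B "insert 1 B"] by blast
    moreover have "sc c 1 \<in> span (insert 1 B)" by (simp add: span_base span_scale)
    ultimately have "(x - sc c 1) + sc c 1 \<in> span (insert 1 B)" using span_add by blast
    then show ?thesis by simp
  qed
  then show ?thesis by blast
qed

lemma basisM: assumes "dim (UNIV::'a set) = n + 2"
  obtains BM where "BM \<subseteq> M" "independent BM" "M \<subseteq> span BM" "card BM = n + 1" "finite BM"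
proof -
  obtain BM where B: "BM \<subseteq> M" "independent BM" "M \<subseteq> span BM" using basis_exists[of M] by metis
  have fin: "finite BM" using B(2) by (rule finiteI_independent)
  have "span BM \<subseteq> M" using span_minimal[OF B(1) M_sub] .
  then have "1 \<notin> span BM" using one_notin by (meson subsetD)
  then have "independent (insert 1 BM)" using independent_insertI B(2) by metis
  then have "dim (UNIV::'a set) = card (insert 1 BM)"
    using dim_eq_card[of "insert 1 BM" UNIV] span_all[OF B(3)] by simp
  moreover have "1 \<notin> BM" using B(1) one_notin by (meson subsetD)
  ultimately have "card BM = n + 1" using assms fin by simp
  then show ?thesis using that B fin by simp
qed

lemma subalg_subspace: "subspace (subalg_gen sc S)"
proof (rule subspaceI)
  show "0 \<in> subalg_gen sc S" unfolding subalg_gen_def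
  proof (rule InterI)
    fix A assume "A \<in> {A. S \<subseteq> A \<and> 1 \<in> A \<and> (\<forall>x\<in>A. \<forall>y\<in>A. x + y \<in> A \<and> x * y \<in> A) \<and> (\<forall>c. \<forall>x\<in>A. sc c x \<in> A)}"
    then have "sc 0 1 \<in> A" by blast
    then show "0 \<in> A" by simp
  qed
  show "x + y \<in> subalg_gen sc S" if "x \<in> subalg_gen sc S" "y \<in> subalg_gen sc S" for x y
    using that unfolding subalg_gen_def by blast
  show "sc c x \<in> subalg_gen sc S" if "x \<in> subalg_gen sc S" for c x
    using that unfolding subalg_gen_def by blast
qed

lemma caseB: assumes dimU: "dim (UNIV::'a set) = n + 2" and x: "x \<in> M" "x * x \<noteq> 0"
  shows "n_factor sc n"
proof -
  have xx: "x * x \<notin> span {x}"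
  proof
    assume "x * x \<in> span {x}"
    then obtain c where "x * x = sc c x" unfolding span_singleton by blast
    then show False using L1[OF x(1)] x(2) by blast
  qed
  have x0: "x \<noteq> 0" using x(2) by (metis mult_zero_left)
  have i1: "independent {x}"
    using independent_insertI[of x "{}"] x0 by simp
  have ind: "independent {x * x, x}"
    using independent_insertI[OF xx i1] .
  have sub: "{x * x, x} \<subseteq> M" using x(1) M_mult(1) by simp
  obtain B where B: "{x * x, x} \<subseteq> B" "B \<subseteq> M" "independent B" "M \<subseteq> span B"
    using maximal_independent_subset_extend[OF sub ind] by metis
  have fin: "finite B" using B(3) by (rule finiteI_independent)
  obtain BM where BM: "BM \<subseteq> M" "independent BM" "M \<subseteq> span BM" "card BM = n + 1"
    using basisM[OF dimU] by metis
  have "card B = dim M" using basis_card_eq_dim[OF B(2) B(4) B(3)] .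
  moreover have "card BM = dim M" using basis_card_eq_dim[OF BM(1) BM(3) BM(2)] .
  ultimately have cB: "card B = n + 1" using BM(4) by simp
  define S where "S = B - {x * x}"
  have xxB: "x * x \<in> B" using B(1) by simp
  have cS: "card S = n" unfolding S_def using cB fin xxB by (simp add: card_Diff_singleton)
  have iS: "independent S" unfolding S_def using B(3) independent_mono by (metis Diff_subset)
  have xnx: "x \<noteq> x * x" using xx span_base[of x "{x}"] by auto
  let ?A = "subalg_gen sc S"
  have SA: "S \<subseteq> ?A" unfolding subalg_gen_def by blast
  have oA: "1 \<in> ?A" unfolding subalg_gen_def by blast
  have xS: "x \<in> S" using B(1) xnx unfolding S_def by simp
  have mA: "\<And>a b. a \<in> ?A \<Longrightarrow> b \<in> ?A \<Longrightarrow> a * b \<in> ?A" unfolding subalg_gen_def by blast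
  have "x * x \<in> ?A" using mA SA xS by blast
  then have "insert 1 B \<subseteq> ?A" using SA oA unfolding S_def by blast
  then have "span (insert 1 B) \<subseteq> ?A" using span_minimal subalg_subspace by metis
  then have gen: "?A = UNIV" using span_all[OF B(4)] by blast
  have finS: "finite S" unfolding S_def using fin by simp
  obtain s where s: "bij_betw s {0..<card S} S" using ex_bij_betw_nat_finite[OF finS] by metis
  then have "inj_on s {..<n}" "s ` {..<n} = S" using cS by (simp_all add: bij_betw_def lessThan_atLeast0)
  then show ?thesis unfolding n_factor_def using iS gen by metis
qed

lemma caseA: assumes dimU: "dim (UNIV::'a set) = n + 2" and sq0: "\<And>x. x \<in> M \<Longrightarrow> x * x = 0"
  shows "iso_Bn sc n"
proof -
  have prod0: "x * y = 0" if "x \<in> M" "y \<in> M" for x y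
  proof -
    have "x + y \<in> M" using that M_ideal unfolding is_ideal_def by blast
    then have "(x + y) * (x + y) = 0" by (rule sq0)
    then have "x * y + x * y = 0" using sq0[OF that(1)] sq0[OF that(2)]
      by (simp add: algebra_simps)
    moreover have "sc (1 + 1) (x * y) = x * y + x * y" by (simp only: scale_left_distrib scale_one)
    ultimately have "sc (1 + 1) (x * y) = 0" by simp
    then have "sc 2 (x * y) = 0" by (simp only: one_add_one)
    then show ?thesis by simp
  qed
  obtain BM where BM: "BM \<subseteq> M" "independent BM" "M \<subseteq> span BM" "card BM = n + 1" "finite BM"
    using basisM[OF dimU] by metis
  obtain b where b: "bij_betw b {1..n+1} BM" using ex_bij_betw_nat_finite_1[OF BM(5)] BM(4) by metis
  have spBM: "span BM \<subseteq> M" using span_minimal[OF BM(1) M_sub] .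
  define I where "I = {1..n+1}"
  have finI: "finite I" unfolding I_def by simp
  have bM: "b i \<in> M" if "i \<in> I" for i using b BM(1) that unfolding I_def bij_betw_def by blast
  define mB where "mB a = (\<Sum>i\<in>I. sc (a i) (b i))" for a :: "nat \<Rightarrow> complex"
  define g where "g a = sc (a 0) 1 + mB a" for a
  have mB_M: "mB a \<in> M" for a
  proof -
    have "mB a \<in> span BM" unfolding mB_def
      by (rule span_sum, rule span_scale, rule span_base) (use b in \<open>auto simp: I_def bij_betw_def\<close>)
    then show ?thesis using spBM by blast
  qed
  have mB_add: "mB (Bn_add a a') = mB a + mB a'" for a a'
    unfolding mB_def Bn_add_def by (simp add: scale_left_distrib sum.distrib)
  have mB_scale: "mB (Bn_scale c a) = sc c (mB a)" for c a
    unfolding mB_def Bn_scale_def by (simp add: scale_sum_right)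
  have mB_mult: "mB (Bn_mult n a a') = sc (a 0) (mB a') + sc (a' 0) (mB a)" for a a'
  proof -
    have "mB (Bn_mult n a a') = (\<Sum>i\<in>I. sc (a 0 * a' i + a' 0 * a i) (b i))"
      unfolding mB_def Bn_mult_def by (rule sum.cong) (auto simp: I_def)
    also have "\<dots> = sc (a 0) (mB a') + sc (a' 0) (mB a)"
      unfolding mB_def by (simp add: scale_left_distrib sum.distrib scale_sum_right)
    finally show ?thesis .
  qed
  have g_add: "g (Bn_add a a') = g a + g a'" for a a'
    unfolding g_def mB_add by (simp add: Bn_add_def scale_left_distrib algebra_simps)
  have g_scale: "g (Bn_scale c a) = sc c (g a)" for c a
    unfolding g_def mB_scale by (simp add: Bn_scale_def scale_right_distrib)
  have g_one: "g Bn_one = 1"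
  proof -
    have "mB Bn_one = 0" unfolding mB_def Bn_one_def by (rule sum.neutral) (auto simp: I_def)
    then show ?thesis unfolding g_def by (simp add: Bn_one_def)
  qed
  have g_mult: "g (Bn_mult n a a') = g a * g a'" for a a'
  proof -
    have p: "mB a * mB a' = 0" using prod0 mB_M by blast
    have "g a * g a' = sc (a 0) 1 * sc (a' 0) 1 + sc (a 0) 1 * mB a' + mB a * sc (a' 0) 1 + mB a * mB a'"
      unfolding g_def by (simp add: algebra_simps)
    also have "\<dots> = sc (a 0 * a' 0) 1 + sc (a 0) (mB a') + sc (a' 0) (mB a)"
      using p by (simp add: scm1 scm2)
    also have "\<dots> = g (Bn_mult n a a')"
      unfolding g_def mB_mult by (simp add: Bn_mult_def algebra_simps)
    finally show ?thesis by simp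
  qed
  define C where "C = Bn_carrier n"
  have C_add: "Bn_add a a' \<in> C" if "a \<in> C" "a' \<in> C" for a a'
    using that unfolding C_def Bn_carrier_def Bn_add_def by simp
  have C_scale: "Bn_scale c a \<in> C" if "a \<in> C" for c a
    using that unfolding C_def Bn_carrier_def Bn_scale_def by simp
  have C_mult: "Bn_mult n a a' \<in> C" for a a'
    unfolding C_def Bn_carrier_def Bn_mult_def by simp
  have C_one: "Bn_one \<in> C" unfolding C_def Bn_carrier_def Bn_one_def by simp
  have zero: "d = (\<lambda>_. 0)" if d: "d \<in> C" "g d = 0" for d
  proof -
    have d0: "d 0 = 0"
    proof (rule ccontr)
      assume nz: "d 0 \<noteq> 0"
      have "sc (d 0) 1 = - mB d" using d(2) unfolding g_def by (simp add: eq_neg_iff_add_eq_0)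
      then have "sc (d 0) 1 \<in> M" using mB_M M_sub by (metis scale_minus_left scale_one subspace_def)
      then have "sc (inverse (d 0)) (sc (d 0) 1) \<in> M" using M_sub unfolding subspace_def by blast
      then have "1 \<in> M" using nz by simp
      then show False using one_notin by simp
    qed
    then have m0: "mB d = 0" using d(2) unfolding g_def by simp
    define u where "u v = d (inv_into I b v)" for v
    have bI: "bij_betw b I BM" using b unfolding I_def .
    have "(\<Sum>v\<in>BM. sc (u v) v) = (\<Sum>i\<in>I. sc (u (b i)) (b i))"
      by (rule sum.reindex_bij_betw[OF bI, symmetric])
    also have "\<dots> = mB d" unfolding mB_def u_def
      by (rule sum.cong) (use bI in \<open>auto simp: bij_betw_def\<close>)
    finally have s0: "(\<Sum>v\<in>BM. sc (u v) v) = 0" using m0 by simp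
    have "d i = 0" for i
    proof (cases "i \<in> I")
      case True
      then have "b i \<in> BM" using bI unfolding bij_betw_def by blast
      then have "u (b i) = 0" by (rule independentD[OF BM(2) BM(5) subset_refl s0])
      moreover have "inv_into I b (b i) = i" using bI True unfolding bij_betw_def by (simp add: inv_into_f_f)
      ultimately show ?thesis unfolding u_def by simp
    next
      case False
      then show ?thesis using d0 d(1) unfolding C_def Bn_carrier_def I_def
        by (cases "i = 0") auto
    qed
    then show ?thesis by auto
  qed
  have inj: "inj_on g C"
  proof (rule inj_onI)
    fix a a' assume a: "a \<in> C" "a' \<in> C" "g a = g a'"
    let ?d = "Bn_add a (Bn_scale (-1) a')"
    have "?d \<in> C" using a C_add C_scale by blast
    moreover have "g ?d = 0" using a(3) g_add g_scale by simp
    ultimately have "?d = (\<lambda>_. 0)" using zero by blast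
    then have "\<And>i. a i - a' i = 0" unfolding Bn_add_def Bn_scale_def by (metis add_uminus_conv_diff mult_minus1)
    then show "a = a'" by auto
  qed
  have sub: "subspace (g ` C)"
  proof (rule subspaceI)
    have "g (Bn_scale 0 Bn_one) = 0" using g_scale by simp
    then show "0 \<in> g ` C" using C_scale C_one by (metis image_eqI)
    show "x + y \<in> g ` C" if "x \<in> g ` C" "y \<in> g ` C" for x y
      using that g_add C_add by (metis (no_types, lifting) image_iff)
    show "sc c x \<in> g ` C" if "x \<in> g ` C" for c x
      using that g_scale C_scale by (metis (no_types, lifting) image_iff)
  qed
  have "insert 1 BM \<subseteq> g ` C"
  proof
    fix v assume "v \<in> insert 1 BM"
    then consider "v = 1" | "v \<in> BM" by blast
    then show "v \<in> g ` C"
    proof cases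
      case 1 then show ?thesis using g_one C_one by (metis image_eqI)
    next
      case 2
      then obtain i where i: "i \<in> I" "v = b i" using b unfolding I_def bij_betw_def by blast
      define e where "e = (\<lambda>j. if j = i then (1::complex) else 0)"
      have i0: "i \<noteq> 0" using i unfolding I_def by simp
      have "mB e = (\<Sum>j\<in>I. if j = i then b j else 0)" unfolding mB_def e_def
        by (rule sum.cong) auto
      also have "\<dots> = b i" using i finI by simp
      finally have "g e = v" unfolding g_def e_def using i i0 by simp
      moreover have "e \<in> C" using i unfolding C_def Bn_carrier_def e_def I_def by auto
      ultimately show ?thesis by blast
    qed
  qed
  then have "span (insert 1 BM) \<subseteq> g ` C" using span_minimal sub by metis
  then have surj: "g ` C = UNIV" using span_all[OF BM(3)] by blast
  have bij: "bij_betw g C UNIV" using inj surj unfolding bij_betw_def by blast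
  define f where "f = inv_into C g"
  have fb: "bij_betw f UNIV C" unfolding f_def by (rule bij_betw_inv_into[OF bij])
  have fC: "f x \<in> C" for x using fb unfolding bij_betw_def by blast
  have gf: "g (f x) = x" for x unfolding f_def using surj by (simp add: f_inv_into_f)
  have fg: "f (g a) = a" if "a \<in> C" for a unfolding f_def using inj that by (simp add: inv_into_f_f)
  have "f (x + y) = Bn_add (f x) (f y)" for x y
    using fg[OF C_add[OF fC fC], of x y] g_add gf by simp
  moreover have "f (x * y) = Bn_mult n (f x) (f y)" for x y
    using fg[OF C_mult, of "f x" "f y"] g_mult gf by simp
  moreover have "f (sc c x) = Bn_scale c (f x)" for c x
    using fg[OF C_scale[OF fC], of c x] g_scale gf by simp
  moreover have "f 1 = Bn_one" using fg[OF C_one] g_one by simp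
  ultimately show ?thesis unfolding iso_Bn_def using fb unfolding C_def by blast
qed

end

theorem lemma3:
  fixes sc :: "complex \<Rightarrow> 'a::comm_ring_1 \<Rightarrow> 'a" and n :: nat
  assumes "local_algebra sc"
    and "vector_space.dim sc (UNIV :: 'a set) = n + 2"
    and "\<not> iso_Bn sc n"
  shows "n_factor sc n"
proof -
  have vs: "vector_space sc" and mc: "\<And>c x y. sc c (x * y) = sc c x * y"
    using assms(1) unfolding local_algebra_def cx_algebra_def by auto
  interpret V: vector_space sc by (rule vs)
  obtain B where B: "finite B" "V.span B = UNIV" using assms(1) unfolding local_algebra_def by blast
  obtain B' where B': "B' \<subseteq> B" "V.independent B'" "B \<subseteq> V.span B'"
    using V.maximal_independent_subset[of B] by metis
  have "V.span B \<subseteq> V.span B'" using V.span_minimal[OF B'(3) V.subspace_span] .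
  then have spB': "V.span B' = UNIV" using B(2) by auto
  obtain M :: "'a set" where M: "maximal_ideal M" "\<And>J. maximal_ideal J \<Longrightarrow> J = M"
  proof -
    have "\<exists>!M :: 'a set. maximal_ideal M" using assms(1) unfolding local_algebra_def by (elim conjE)
    then show ?thesis using that by blast
  qed
  have rM: "residue_field_C sc M" using assms(1) M(1) unfolding local_algebra_def by blast
  interpret L: la sc B' M
    by unfold_locales (simp_all add: finite_subset[OF B'(1) B(1)] B'(2) spB' mc M rM)
  show ?thesis
  proof (cases "\<exists>x\<in>M. x * x \<noteq> 0")
    case True
    then obtain x where "x \<in> M" "x * x \<noteq> 0" by blast
    then show ?thesis by (rule L.caseB[OF assms(2)])
  next
    case False
    then have "iso_Bn sc n" using L.caseA[OF assms(2)] by blast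
    then show ?thesis using assms(3) by blast
  qed
qed

end
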